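(* Let $d=\infty$ and $C>0$. Then $$\mathcal P_d\subsetneq\mathcal A_d=T^\uparrow_{d,C}(\mathcal S_{d,C})\subsetneq\mathcal N_d\subsetneq\mathcal M_d,$$ and $T^\uparrow_{d,C}$ is a bijection from $\mathcal S_{d,C}$ onto $\mathcal A_d$ with inverse $T^\downarrow_{d,C}|_{\mathcal A_d}$. Moreover $T^\downarrow_{d,C}(\mathcal M_d)=\mathcal S_{d,C}$, and for every ${\boldsymbol\gamma}\in\mathcal M_d$ one has $(T^\uparrow_{d,C}\circ T^\downarrow_{d,C}){\boldsymbol\gamma}\le{\boldsymbol\gamma}$, with equality if and only if ${\boldsymbol\gamma}\in\mathcal A_d$.
   Context: Let $d\in\mathbb N\cup\{\infty\}$. Write $[d]=\{1,\dots,d\}$ if $d\in\mathbb N$ and $[d]=\mathbb N$ if $d=\infty$; for $s\in\mathbb N$, $[s]=\{1,\dots,s\}$. Let $\mathcal U_d$ be the set of all finite subsets of $[d]$. For families ${\boldsymbol\gamma}=(\gamma_u)_{u\in\mathcal U_d}$ of real numbers, inequalities and limits are meant componentwise, and $\mathbf 0$ denotes the zero family. The set of weights is $\mathcal W_d=\{{\boldsymbol\gamma}\in\mathbb R^{\mathcal U_d}:{\boldsymbol\gamma}\ge\mathbf 0\}$. For $v\in\mathcal U_d$ the difference operator $\Delta_v$ on $\mathbb R^{\mathcal U_d}$ is $(\Delta_v{\boldsymbol\gamma})_u=\sum_{w\subseteq v}(-1)^{|w|}\gamma_{u\cup w}$. Weights are completely monotone if $\Delta_v{\boldsymbol\gamma}\ge\mathbf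 0$ for every $v\in\mathcal U_d$; $\mathcal M_d$ denotes the set of completely monotone weights. For $C>0$ let $\mathcal S_{d,C}=\{{\boldsymbol\gamma}\in\mathcal W_d:\sum_{v\in\mathcal U_d}C^{2|v|}\gamma_v<\infty\}$, and let $T^\uparrow_{d,C}\colon\mathcal S_{d,C}\to\mathcal W_d$, $(T^\uparrow_{d,C}{\boldsymbol\gamma})_u=\sum_{v\in\mathcal U_d,\,u\subseteq v}C^{2|v|}\gamma_v$. Define $T^\downarrow_{d,C}\colon\mathcal M_d\to\mathcal W_d$ by $(T^\downarrow_{d,C}{\boldsymbol\gamma})_u=C^{-2|u|}\lim_{s\to\infty}(\Delta_{[s]\setminus u}{\boldsymbol\gamma})_u$ for $d=\infty$ (the sequence is non-increasing in $[0,\gamma_u]$ for ${\boldsymbol\gamma}\in\mathcal M_d$). For $d=\infty$, with the convention $\max\emptyset=0$: $\mathcal N_d=\{{\boldsymbol\gamma}\in\mathcal M_d:\ \gamma_u\to0 \text{ as } \max u\to\infty\}$ (i.e. for every $\varepsilon>0$ there is $N$ with $\gamma_u<\varepsilon$ whenever $\max u\ge N$); $\mathcal P_d=\{{\boldsymbol\gamma}\in\mathcal M_d:\sum_{v\in\mathcal U_d}\gamma_v<\infty\}$; and $\mathcal A_d=\{{\boldsymbol\gamma}\in\mathcal M_d:\lim_{r\to\infty}\lim_{s\to\infty}\Delta_{[s]\setminus[r]}{\boldsymbol\gamma}={\boldsymbol\gamma}\}$ (componentwise iterated limits). *)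

theory Defs
  imports "HOL-Analysis.Analysis"
begin

text \<open>Index set [d] = N = {1,2,...}; U = finite subsets of {1,2,...}.
  Families indexed by U are represented as functions nat set => real that vanish
  outside U (so componentwise equality is function equality).\<close>

definition U_inf :: "nat set set" where
  "U_inf = {u. finite u \<and> 0 \<notin> u}"

definition W_inf :: "(nat set \<Rightarrow> real) set" where
  "W_inf = {g. (\<forall>u\<in>U_inf. 0 \<le> g u) \<and> (\<forall>u. u \<notin> U_inf \<longrightarrow> g u = 0)}"

definition Delta :: "nat set \<Rightarrow> (nat set \<Rightarrow> real) \<Rightarrow> (nat set \<Rightarrow> real)" where
  "Delta v g = (\<lambda>u. if u \<in> U_inf then (\<Sum>w\<in>Pow v. (-1) ^ card w * g (u \<union> w)) else 0)"

definition M_inf :: "(nat set \<Rightarrow> real) set" where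
  "M_inf = {g \<in> W_inf. \<forall>v\<in>U_inf. \<forall>u\<in>U_inf. 0 \<le> Delta v g u}"

definition S_inf :: "real \<Rightarrow> (nat set \<Rightarrow> real) set" where
  "S_inf C = {g \<in> W_inf. (\<lambda>v. C ^ (2 * card v) * g v) summable_on U_inf}"

definition Tup :: "real \<Rightarrow> (nat set \<Rightarrow> real) \<Rightarrow> (nat set \<Rightarrow> real)" where
  "Tup C g = (\<lambda>u. if u \<in> U_inf then (\<Sum>\<^sub>\<infinity>v\<in>{v\<in>U_inf. u \<subseteq> v}. C ^ (2 * card v) * g v) else 0)"

definition Tdown :: "real \<Rightarrow> (nat set \<Rightarrow> real) \<Rightarrow> (nat set \<Rightarrow> real)" where
  "Tdown C g = (\<lambda>u. if u \<in> U_inf then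
      (1 / C ^ (2 * card u)) * lim (\<lambda>s. Delta ({1..s} - u) g u) else 0)"

definition maxU :: "nat set \<Rightarrow> nat" where
  "maxU u = (if u = {} then 0 else Max u)"

definition N_inf :: "(nat set \<Rightarrow> real) set" where
  "N_inf = {g \<in> M_inf. \<forall>\<epsilon>>0. \<exists>N. \<forall>u\<in>U_inf. N \<le> maxU u \<longrightarrow> g u < \<epsilon>}"

definition P_inf :: "(nat set \<Rightarrow> real) set" where
  "P_inf = {g \<in> M_inf. g summable_on U_inf}"

definition A_inf :: "(nat set \<Rightarrow> real) set" where
  "A_inf = {g \<in> M_inf. \<forall>u\<in>U_inf. \<exists>L :: nat \<Rightarrow> real.
      (\<forall>r. (\<lambda>s. Delta ({1..s} - {1..r}) g u) \<longlonglongrightarrow> L r) \<and> L \<longlonglongrightarrow> g u}"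

end

theory Submission
  imports Defs
begin

definition DD :: "nat set \<Rightarrow> (nat set \<Rightarrow> real) \<Rightarrow> nat set \<Rightarrow> real" where
  "DD A g u = (\<Sum>w\<in>Pow A. (-1) ^ card w * g (u \<union> w))"

lemma Delta_DD: "u \<in> U_inf \<Longrightarrow> Delta v g u = DD v g u"
  by (simp add: Delta_def DD_def)

lemma DD_empty[simp]: "DD {} g u = g u"
  by (simp add: DD_def)

lemma DD_insert:
  assumes "finite A" "i \<notin> A"
  shows "DD (insert i A) g u = DD A g u - DD A g (insert i u)"
proof -
  have inj: "inj_on (insert i) (Pow A)"
    using assms(2) by (intro inj_onI) (metis PowD insert_ident subsetD)
  have disj: "Pow A \<inter> insert i ` Pow A = {}" using assms(2) by auto
  have fin: "finite (Pow A)" using assms(1) by simp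
  have "DD (insert i A) g u = (\<Sum>w\<in>Pow A. (-1) ^ card w * g (u \<union> w))
        + (\<Sum>w\<in>insert i ` Pow A. (-1) ^ card w * g (u \<union> w))"
    unfolding DD_def Pow_insert using disj fin by (simp add: sum.union_disjoint)
  also have "(\<Sum>w\<in>insert i ` Pow A. (-1) ^ card w * g (u \<union> w))
     = (\<Sum>w\<in>Pow A. (-1) ^ card (insert i w) * g (u \<union> insert i w))"
    by (subst sum.reindex[OF inj]) simp
  also have "\<dots> = (\<Sum>w\<in>Pow A. - ((-1) ^ card w * g (insert i u \<union> w)))"
  proof (rule sum.cong)
    fix w assume "w \<in> Pow A"
    then have "finite w" "i \<notin> w" using assms finite_subset by auto
    then show "(-1) ^ card (insert i w) * g (u \<union> insert i w) = - ((-1) ^ card w * g (insert i u \<union> w))"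
      by simp
  qed simp
  also have "\<dots> = - DD A g (insert i u)" by (simp add: DD_def sum_negf)
  finally show ?thesis by (simp add: DD_def)
qed

lemma DD_overlap:
  assumes "finite A" "i \<in> A" "i \<in> u"
  shows "DD A g u = 0"
proof -
  have "A = insert i (A - {i})" using assms by auto
  then have "DD A g u = DD (A - {i}) g u - DD (A - {i}) g (insert i u)"
    using DD_insert[of "A - {i}" i g u] assms by simp
  then show ?thesis using assms(3) by (simp add: insert_absorb)
qed

lemma DD_moebius:
  assumes "finite S" "u \<subseteq> R" "R \<subseteq> S"
  shows "DD (S - R) g u = (\<Sum>v\<in>{v. u \<subseteq> v \<and> v \<subseteq> R}. DD (S - v) g v)"
  using assms
proof (induction "card (R - u)" arbitrary: R u rule: less_induct)
  case less
  have finR: "finite R" using less.prems finite_subset by blast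
  show ?case
  proof (cases "R = u")
    case True
    then have "{v. u \<subseteq> v \<and> v \<subseteq> R} = {u}" by auto
    then show ?thesis using True by simp
  next
    case False
    then obtain i where i: "i \<in> R" "i \<notin> u" using less.prems by blast
    define R' where "R' = R - {i}"
    have c1: "card (R' - u) < card (R - u)"
      unfolding R'_def using i finR by (intro psubset_card_mono) auto
    have c2: "card (R - insert i u) < card (R - u)"
      using i finR by (intro psubset_card_mono) auto
    have IH1: "DD (S - R') g u = (\<Sum>v\<in>{v. u \<subseteq> v \<and> v \<subseteq> R'}. DD (S - v) g v)"
      using less.hyps[OF c1] less.prems i unfolding R'_def by auto
    have IH2: "DD (S - R) g (insert i u) = (\<Sum>v\<in>{v. insert i u \<subseteq> v \<and> v \<subseteq> R}. DD (S - v) g v)"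
      using less.hyps[OF c2] less.prems i by auto
    have SR: "S - R' = insert i (S - R)" unfolding R'_def using i less.prems by auto
    have L1: "DD (S - R') g u = DD (S - R) g u - DD (S - R) g (insert i u)"
      unfolding SR using less.prems i by (intro DD_insert) auto
    have split: "{v. u \<subseteq> v \<and> v \<subseteq> R} = {v. u \<subseteq> v \<and> v \<subseteq> R'} \<union> {v. insert i u \<subseteq> v \<and> v \<subseteq> R}"
      unfolding R'_def using i by auto
    have fin1: "finite {v. u \<subseteq> v \<and> v \<subseteq> R'}"
      by (rule finite_subset[of _ "Pow R'"]) (auto simp: R'_def finR)
    have fin2: "finite {v. insert i u \<subseteq> v \<and> v \<subseteq> R}"
      by (rule finite_subset[of _ "Pow R"]) (auto simp: finR)
    have disj: "{v. u \<subseteq> v \<and> v \<subseteq> R'} \<inter> {v. insert i u \<subseteq> v \<and> v \<subseteq> R} = {}"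
      unfolding R'_def by auto
    show ?thesis
      unfolding split using IH1 IH2 L1 fin1 fin2 disj
      by (simp add: sum.union_disjoint)
  qed
qed


lemma U_diff_intv[simp]: "{1..s} - K \<in> U_inf"
  by (auto simp: U_inf_def)

lemma U_diff_intv'[simp]: "{Suc 0..s} - K \<in> U_inf"
  by (auto simp: U_inf_def)

lemma U_intv'[simp]: "{Suc 0..s} \<in> U_inf"
  by (auto simp: U_inf_def)

lemma U_intv[simp]: "{1..s} \<in> U_inf"
  by (auto simp: U_inf_def)

lemma U_insert: "u \<in> U_inf \<Longrightarrow> i \<noteq> 0 \<Longrightarrow> insert i u \<in> U_inf"
  by (auto simp: U_inf_def)

lemma U_subset_intv:
  assumes "u \<in> U_inf" shows "u \<subseteq> {1..Max (insert 0 u)}"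
proof
  fix x assume "x \<in> u"
  have fin: "finite u" "0 \<notin> u" using assms by (auto simp: U_inf_def)
  have "x \<le> Max (insert 0 u)" using fin \<open>x \<in> u\<close> by (intro Max_ge) auto
  moreover have "x \<noteq> 0" using fin(2) \<open>x \<in> u\<close> by metis
  ultimately show "x \<in> {1..Max (insert 0 u)}" by (cases x) auto
qed

lemma Pow_intv_U: "v \<subseteq> {1..s} \<Longrightarrow> v \<in> U_inf"
  using finite_subset[of v "{1..s}"] by (auto simp: U_inf_def)

lemma Pow_intv_U': "v \<subseteq> {Suc 0..s} \<Longrightarrow> v \<in> U_inf"
  using Pow_intv_U by simp

lemma M_D_nonneg: "g \<in> M_inf \<Longrightarrow> v \<in> U_inf \<Longrightarrow> u \<in> U_inf \<Longrightarrow> 0 \<le> DD v g u"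
  unfolding M_inf_def using Delta_DD by fastforce

lemma M_W: "g \<in> M_inf \<Longrightarrow> g \<in> W_inf" by (simp add: M_inf_def)

lemma W_nonneg: "g \<in> W_inf \<Longrightarrow> u \<in> U_inf \<Longrightarrow> 0 \<le> g u" by (simp add: W_inf_def)
lemma W_zero: "g \<in> W_inf \<Longrightarrow> u \<notin> U_inf \<Longrightarrow> g u = 0" by (simp add: W_inf_def)

lemma M_dec:
  assumes "g \<in> M_inf" "u \<in> U_inf"
  shows "decseq (\<lambda>s. DD ({1..s} - K) g u)"
proof (rule decseq_SucI)
  fix s
  show "DD ({1..Suc s} - K) g u \<le> DD ({1..s} - K) g u"
  proof (cases "Suc s \<in> K")
    case True
    then have "{1..Suc s} - K = {1..s} - K" by (auto simp: le_Suc_eq)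
    then show ?thesis by simp
  next
    case False
    then have e: "{1..Suc s} - K = insert (Suc s) ({1..s} - K)" by auto
    have "0 \<le> DD ({1..s} - K) g (insert (Suc s) u)"
      using assms by (intro M_D_nonneg U_insert) auto
    then show ?thesis unfolding e by (subst DD_insert) auto
  qed
qed

lemma M_conv:
  assumes "g \<in> M_inf" "u \<in> U_inf"
  shows "\<exists>L. (\<lambda>s. DD ({1..s} - K) g u) \<longlonglongrightarrow> L \<and> 0 \<le> L \<and> (\<forall>s. L \<le> DD ({1..s} - K) g u)"
proof -
  have "\<forall>s. 0 \<le> DD ({1..s} - K) g u" using assms M_D_nonneg by auto
  from decseq_convergent[OF M_dec[OF assms] this] obtain L where
    "(\<lambda>s. DD ({1..s} - K) g u) \<longlonglongrightarrow> L" "\<forall>i. L \<le> DD ({1..i} - K) g u" by blast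
  moreover have "0 \<le> L"
    by (rule LIMSEQ_le_const[OF calculation(1)]) (use \<open>\<forall>s. 0 \<le> _\<close> in blast)
  ultimately show ?thesis by blast
qed

lemma M_le_g:
  assumes "g \<in> M_inf" "u \<in> U_inf"
  shows "DD ({1..s} - K) g u \<le> g u"
proof -
  have "DD ({1..s} - K) g u \<le> DD ({1..0} - K) g u"
    using M_dec[OF assms, unfolded decseq_def, rule_format, of 0 s] by simp
  then show ?thesis by simp
qed

definition Tt :: "(nat set \<Rightarrow> real) \<Rightarrow> nat set \<Rightarrow> real" where
  "Tt g u = lim (\<lambda>s. DD ({1..s} - u) g u)"

lemma Tt_lim:
  assumes "g \<in> M_inf" "u \<in> U_inf"
  shows "(\<lambda>s. DD ({1..s} - u) g u) \<longlonglongrightarrow> Tt g u" "0 \<le> Tt g u" "Tt g u \<le> DD ({1..s} - u) g u"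
proof -
  obtain L where L: "(\<lambda>s. DD ({1..s} - u) g u) \<longlonglongrightarrow> L" "0 \<le> L" "\<forall>s. L \<le> DD ({1..s} - u) g u"
    using M_conv[OF assms] by blast
  then have "Tt g u = L" unfolding Tt_def by (simp add: limI)
  then show "(\<lambda>s. DD ({1..s} - u) g u) \<longlonglongrightarrow> Tt g u" "0 \<le> Tt g u" "Tt g u \<le> DD ({1..s} - u) g u"
    using L by auto
qed

lemma Tdown_eq:
  assumes "C > 0" "u \<in> U_inf"
  shows "C ^ (2 * card u) * Tdown C g u = Tt g u"
  using assms by (simp add: Tdown_def Delta_DD Tt_def)

lemma Tdown_nonneg:
  assumes "C > 0" "g \<in> M_inf" "u \<in> U_inf"
  shows "0 \<le> Tdown C g u"
  using assms Tt_lim(2)[OF assms(2,3)] by (simp add: Tdown_def Delta_DD Tt_def)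

lemma Tdown_W:
  assumes "C > 0" "g \<in> M_inf"
  shows "Tdown C g \<in> W_inf"
  using Tdown_nonneg[OF assms] unfolding W_inf_def by (auto simp: Tdown_def)

lemma Tt_partial:
  assumes "g \<in> M_inf" "u \<in> U_inf" "finite F" "F \<subseteq> {v\<in>U_inf. u \<subseteq> v}"
  shows "sum (Tt g) F \<le> g u"
proof -
  define s where "s = Max (insert 0 (\<Union>F \<union> u))"
  have finU: "finite (\<Union>F \<union> u)" using assms by (auto simp: U_inf_def)
  have sub: "v \<subseteq> {1..s}" if "v \<in> F \<or> v = u" for v
  proof
    fix x assume "x \<in> v"
    have "v \<in> U_inf" using that assms by auto
    then have "0 \<notin> v" by (auto simp: U_inf_def)
    with \<open>x \<in> v\<close> have "x \<noteq> 0" by metis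
    moreover have "x \<le> s" unfolding s_def using finU \<open>x \<in> v\<close> that by (intro Max_ge) auto
    ultimately show "x \<in> {1..s}" by (cases x) auto
  qed
  have finV: "finite {v. u \<subseteq> v \<and> v \<subseteq> {1..s}}"
    by (rule finite_subset[of _ "Pow {1..s}"]) auto
  have "sum (Tt g) F \<le> sum (Tt g) {v. u \<subseteq> v \<and> v \<subseteq> {1..s}}"
    using assms sub finV by (intro sum_mono2) (auto intro!: Tt_lim(2) intro: Pow_intv_U Pow_intv_U')
  also have "\<dots> \<le> (\<Sum>v\<in>{v. u \<subseteq> v \<and> v \<subseteq> {1..s}}. DD ({1..s} - v) g v)"
    using assms by (intro sum_mono Tt_lim(3)) (auto intro: Pow_intv_U Pow_intv_U')
  also have "\<dots> = DD ({1..s} - {1..s}) g u"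
    using sub[of u] by (intro DD_moebius[symmetric]) auto
  finally show ?thesis by simp
qed

lemma Tt_summable:
  assumes "g \<in> M_inf" "u \<in> U_inf"
  shows "Tt g summable_on {v\<in>U_inf. u \<subseteq> v}" "infsum (Tt g) {v\<in>U_inf. u \<subseteq> v} \<le> g u"
proof -
  show *: "Tt g summable_on {v\<in>U_inf. u \<subseteq> v}"
  proof (rule nonneg_bdd_above_summable_on)
    show "bdd_above (sum (Tt g) ` {F. F \<subseteq> {v\<in>U_inf. u \<subseteq> v} \<and> finite F})"
      by (rule bdd_aboveI[of _ "g u"]) (use Tt_partial[OF assms] in blast)
  qed (use Tt_lim(2)[OF assms(1)] in blast)
  show "infsum (Tt g) {v\<in>U_inf. u \<subseteq> v} \<le> g u"
    by (rule infsum_le_finite_sums[OF *]) (use Tt_partial[OF assms] in auto)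
qed

lemma Tup_Tdown:
  assumes "C > 0" "u \<in> U_inf"
  shows "Tup C (Tdown C g) u = infsum (Tt g) {v\<in>U_inf. u \<subseteq> v}"
proof -
  have "Tup C (Tdown C g) u = infsum (\<lambda>v. C^(2*card v) * Tdown C g v) {v\<in>U_inf. u \<subseteq> v}"
    using assms by (simp add: Tup_def)
  also have "\<dots> = infsum (Tt g) {v\<in>U_inf. u \<subseteq> v}"
    by (rule infsum_cong) (use Tdown_eq[OF assms(1)] in blast)
  finally show ?thesis .
qed

lemma Tdown_S:
  assumes "C > 0" "g \<in> M_inf"
  shows "Tdown C g \<in> S_inf C"
proof -
  have e: "{} \<in> U_inf" by (simp add: U_inf_def)
  have "Tt g summable_on {v\<in>U_inf. {} \<subseteq> v}"
    by (rule Tt_summable(1)[OF assms(2) e])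
  then have "Tt g summable_on U_inf" by simp
  moreover have "(\<lambda>v. C ^ (2 * card v) * Tdown C g v) summable_on U_inf \<longleftrightarrow> Tt g summable_on U_inf"
    by (rule summable_on_cong) (use Tdown_eq[OF assms(1)] in blast)
  ultimately have "(\<lambda>v. C ^ (2 * card v) * Tdown C g v) summable_on U_inf" by simp
  then show ?thesis using Tdown_W[OF assms] by (simp add: S_inf_def)
qed

lemma exhaust_lim:
  fixes f :: "'a \<Rightarrow> real"
  assumes "f summable_on X" "\<And>r. finite (F r)" "\<And>r. F r \<subseteq> X" "mono F"
    "\<And>x. x \<in> X \<Longrightarrow> \<exists>r. x \<in> F r"
  shows "(\<lambda>r. sum f (F r)) \<longlonglongrightarrow> infsum f X"
proof -
  have h: "(sum f \<longlongrightarrow> infsum f X) (finite_subsets_at_top X)"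
    using assms(1) has_sum_def has_sum_infsum by blast
  have ev: "eventually (\<lambda>r. x \<in> F r) sequentially" if xX: "x \<in> X" for x
  proof -
    obtain r where "x \<in> F r" using assms(5) xX by blast
    then show ?thesis unfolding eventually_sequentially using assms(4)
      by (meson monoD subsetD)
  qed
  have "filterlim F (finite_subsets_at_top X) sequentially"
    unfolding filterlim_finite_subsets_at_top
  proof (intro allI impI)
    fix Y assume Y: "finite Y \<and> Y \<subseteq> X"
    have "eventually (\<lambda>r. \<forall>y\<in>Y. y \<in> F r) sequentially"
      using Y ev by (intro eventually_ball_finite) auto
    then show "eventually (\<lambda>r. finite (F r) \<and> Y \<subseteq> F r \<and> F r \<subseteq> X) sequentially"
      using assms(2,3) by (auto elim!: eventually_mono)
  qed
  from tendsto_compose_filtermap[of "sum f"] filterlim_compose[OF h this]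
  show ?thesis by (simp add: o_def)
qed

lemma tail_lim:
  fixes f :: "nat set \<Rightarrow> real"
  assumes "f summable_on U_inf"
  shows "(\<lambda>s. infsum f (U_inf - Pow {1..s})) \<longlonglongrightarrow> 0"
proof -
  have sub: "Pow {1..s} \<subseteq> U_inf" for s using Pow_intv_U by auto
  have eq: "infsum f (U_inf - Pow {1..s}) = infsum f U_inf - sum f (Pow {1..s})" for s
    using assms sub summable_on_subset[OF assms sub] by (subst infsum_Diff) auto
  have "(\<lambda>s. sum f (Pow {1..s})) \<longlonglongrightarrow> infsum f U_inf"
  proof (rule exhaust_lim[OF assms])
    show "mono (\<lambda>s. Pow {1..s})" by (rule monoI, rule Pow_mono) auto
    show "\<exists>r. x \<in> Pow {1..r}" if "x \<in> U_inf" for x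
      using U_subset_intv[OF that] by blast
  qed (use sub in auto)
  then have "(\<lambda>s. infsum f U_inf - sum f (Pow {1..s})) \<longlonglongrightarrow> infsum f U_inf - infsum f U_inf"
    by (intro tendsto_intros)
  then show ?thesis unfolding eq by simp
qed


lemma S_W: "h \<in> S_inf C \<Longrightarrow> h \<in> W_inf" by (simp add: S_inf_def)
lemma S_summ: "h \<in> S_inf C \<Longrightarrow> (\<lambda>v. C ^ (2 * card v) * h v) summable_on U_inf"
  by (simp add: S_inf_def)

lemma S_c_nonneg: "C > 0 \<Longrightarrow> h \<in> S_inf C \<Longrightarrow> v \<in> U_inf \<Longrightarrow> 0 \<le> C ^ (2 * card v) * h v"
  using W_nonneg[OF S_W] by simp

lemma S_summ_sub: "h \<in> S_inf C \<Longrightarrow> X \<subseteq> U_inf \<Longrightarrow> (\<lambda>v. C ^ (2 * card v) * h v) summable_on X"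
  using summable_on_subset[OF S_summ] by blast

lemma Tup_D:
  assumes "C > 0" "h \<in> S_inf C" "finite A" "0 \<notin> A" "u \<in> U_inf" "A \<inter> u = {}"
  shows "DD A (Tup C h) u = infsum (\<lambda>v. C ^ (2 * card v) * h v) {v\<in>U_inf. u \<subseteq> v \<and> v \<inter> A = {}}"
  using assms(3-6)
proof (induction A arbitrary: u rule: finite_induct)
  case empty
  then show ?case by (simp add: Tup_def)
next
  case (insert i A)
  let ?c = "\<lambda>v. C ^ (2 * card v) * h v"
  have iu: "insert i u \<in> U_inf" using insert.prems by (intro U_insert) auto
  have IH1: "DD A (Tup C h) u = infsum ?c {v\<in>U_inf. u \<subseteq> v \<and> v \<inter> A = {}}"
    using insert by auto
  have IH2: "DD A (Tup C h) (insert i u) = infsum ?c {v\<in>U_inf. insert i u \<subseteq> v \<and> v \<inter> A = {}}"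
    using insert iu by auto
  have "DD (insert i A) (Tup C h) u = DD A (Tup C h) u - DD A (Tup C h) (insert i u)"
    using insert by (intro DD_insert) auto
  also have "\<dots> = infsum ?c ({v\<in>U_inf. u \<subseteq> v \<and> v \<inter> A = {}} - {v\<in>U_inf. insert i u \<subseteq> v \<and> v \<inter> A = {}})"
    unfolding IH1 IH2
    by (rule infsum_Diff[symmetric]) (auto intro!: S_summ_sub[OF assms(2)])
  also have "{v\<in>U_inf. u \<subseteq> v \<and> v \<inter> A = {}} - {v\<in>U_inf. insert i u \<subseteq> v \<and> v \<inter> A = {}}
      = {v\<in>U_inf. u \<subseteq> v \<and> v \<inter> insert i A = {}}" by auto
  finally show ?case .
qed

lemma Tup_nonneg:
  assumes "C > 0" "h \<in> S_inf C" "u \<in> U_inf"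
  shows "0 \<le> Tup C h u"
  using assms S_c_nonneg[OF assms(1,2)] by (auto simp: Tup_def intro!: infsum_nonneg)

lemma Tup_M:
  assumes "C > 0" "h \<in> S_inf C"
  shows "Tup C h \<in> M_inf"
proof -
  have W: "Tup C h \<in> W_inf"
    unfolding W_inf_def using Tup_nonneg[OF assms] by (auto simp: Tup_def)
  have "0 \<le> Delta v (Tup C h) u" if v: "v \<in> U_inf" and u: "u \<in> U_inf" for u v
  proof (cases "v \<inter> u = {}")
    case True
    have "Delta v (Tup C h) u = infsum (\<lambda>v. C ^ (2 * card v) * h v) {w\<in>U_inf. u \<subseteq> w \<and> w \<inter> v = {}}"
      using v u True by (simp add: Delta_DD Tup_D[OF assms] U_inf_def)
    also have "\<dots> \<ge> 0" using S_c_nonneg[OF assms] by (intro infsum_nonneg) auto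
    finally show ?thesis .
  next
    case False
    then obtain i where "i \<in> v" "i \<in> u" by blast
    then have "DD v (Tup C h) u = 0" using v by (intro DD_overlap) (auto simp: U_inf_def)
    then show ?thesis using u by (simp add: Delta_DD)
  qed
  then show ?thesis using W by (simp add: M_inf_def)
qed

lemma Tdown_Tup:
  assumes "C > 0" "h \<in> S_inf C"
  shows "Tdown C (Tup C h) = h"
proof
  fix u
  show "Tdown C (Tup C h) u = h u"
  proof (cases "u \<in> U_inf")
    case False
    then show ?thesis using W_zero[OF S_W[OF assms(2)] False] by (simp add: Tdown_def)
  next
    case u: True
    let ?c = "\<lambda>v. C ^ (2 * card v) * h v"
    define E where "E s = {v\<in>U_inf. u \<subseteq> v \<and> v \<inter> ({1..s} - u) = {}}" for s
    define s0 where "s0 = Max (insert 0 u)"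
    have u0: "0 \<notin> u" using u by (simp add: U_inf_def)
    have seq: "DD ({1..s} - u) (Tup C h) u = infsum ?c (E s)" for s
      unfolding E_def using u by (intro Tup_D[OF assms]) auto
    have EU: "E s \<subseteq> U_inf" for s unfolding E_def by auto
    have bnd: "?c u \<le> DD ({1..s} - u) (Tup C h) u \<and> DD ({1..s} - u) (Tup C h) u \<le> ?c u + infsum ?c (U_inf - Pow {1..s})"
      if "s \<ge> s0" for s
    proof -
      have usub: "u \<subseteq> {1..s}" using U_subset_intv[OF u] that unfolding s0_def by auto
      have uE: "u \<in> E s" using u unfolding E_def by auto
      have d: "infsum ?c (E s - {u}) = infsum ?c (E s) - ?c u"
        using uE by (subst infsum_Diff) (auto intro!: S_summ_sub[OF assms(2)] EU u)
      have "0 \<le> infsum ?c (E s - {u})"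
        using S_c_nonneg[OF assms] EU by (intro infsum_nonneg) auto
      moreover have "infsum ?c (E s - {u}) \<le> infsum ?c (U_inf - Pow {1..s})"
      proof (rule infsum_mono2)
        show "E s - {u} \<subseteq> U_inf - Pow {1..s}"
        proof
          fix v assume v: "v \<in> E s - {u}"
          then have "v \<in> U_inf" "u \<subseteq> v" "v \<inter> ({1..s} - u) = {}" "v \<noteq> u" unfolding E_def by auto
          then have "\<not> v \<subseteq> {1..s}" by blast
          then show "v \<in> U_inf - Pow {1..s}" using \<open>v \<in> U_inf\<close> by auto
        qed
      qed (use S_c_nonneg[OF assms] EU in \<open>auto intro!: S_summ_sub[OF assms(2)]\<close>)
      ultimately show ?thesis using d seq[of s] by simp
    qed
    have "(\<lambda>s. DD ({1..s} - u) (Tup C h) u) \<longlonglongrightarrow> ?c u"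
    proof (rule tendsto_sandwich)
      show "eventually (\<lambda>s. ?c u \<le> DD ({1..s} - u) (Tup C h) u) sequentially"
        unfolding eventually_sequentially using bnd by blast
      show "eventually (\<lambda>s. DD ({1..s} - u) (Tup C h) u \<le> ?c u + infsum ?c (U_inf - Pow {1..s})) sequentially"
        unfolding eventually_sequentially using bnd by blast
      have "(\<lambda>s. ?c u + infsum ?c (U_inf - Pow {1..s})) \<longlonglongrightarrow> ?c u + 0"
        by (intro tendsto_intros tail_lim S_summ[OF assms(2)])
      then show "(\<lambda>s. ?c u + infsum ?c (U_inf - Pow {1..s})) \<longlonglongrightarrow> ?c u" by simp
    qed simp
    moreover have "(\<lambda>s. DD ({1..s} - u) (Tup C h) u) \<longlonglongrightarrow> Tt (Tup C h) u"
      by (rule Tt_lim(1)[OF Tup_M[OF assms] u])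
    ultimately have "Tt (Tup C h) u = ?c u" using LIMSEQ_unique by blast
    then have "C ^ (2 * card u) * Tdown C (Tup C h) u = C ^ (2 * card u) * h u"
      using Tdown_eq[OF assms(1) u] by simp
    then show ?thesis using assms(1) by simp
  qed
qed

lemma Lr_lim:
  assumes "g \<in> M_inf" "u \<in> U_inf" "u \<subseteq> {1..r}"
  shows "(\<lambda>s. DD ({1..s} - {1..r}) g u) \<longlonglongrightarrow> sum (Tt g) {v. u \<subseteq> v \<and> v \<subseteq> {1..r}}"
proof -
  have "(\<lambda>s. \<Sum>v\<in>{v. u \<subseteq> v \<and> v \<subseteq> {1..r}}. DD ({1..s} - v) g v) \<longlonglongrightarrow> sum (Tt g) {v. u \<subseteq> v \<and> v \<subseteq> {1..r}}"
    by (intro tendsto_sum Tt_lim(1)[OF assms(1)] Pow_intv_U) auto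
  moreover have "eventually (\<lambda>s. (\<Sum>v\<in>{v. u \<subseteq> v \<and> v \<subseteq> {1..r}}. DD ({1..s} - v) g v) = DD ({1..s} - {1..r}) g u) sequentially"
    unfolding eventually_sequentially
    by (rule exI[of _ r], intro allI impI, rule DD_moebius[symmetric]) (use assms(3) in auto)
  ultimately show ?thesis by (rule Lim_transform_eventually)
qed

lemma Pr_lim:
  assumes "g \<in> M_inf" "u \<in> U_inf"
  shows "(\<lambda>r. sum (Tt g) {v. u \<subseteq> v \<and> v \<subseteq> {1..r}}) \<longlonglongrightarrow> infsum (Tt g) {v\<in>U_inf. u \<subseteq> v}"
proof (rule exhaust_lim[OF Tt_summable(1)[OF assms]])
  show "finite {v. u \<subseteq> v \<and> v \<subseteq> {1..r}}" for r
    by (rule finite_subset[of _ "Pow {1..r}"]) auto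
  show "{v. u \<subseteq> v \<and> v \<subseteq> {1..r}} \<subseteq> {v\<in>U_inf. u \<subseteq> v}" for r
    using Pow_intv_U by auto
  show "mono (\<lambda>r. {v. u \<subseteq> v \<and> v \<subseteq> {1..r}})"
    by (rule monoI) auto
  show "\<exists>r. x \<in> {v. u \<subseteq> v \<and> v \<subseteq> {1..r}}" if "x \<in> {v\<in>U_inf. u \<subseteq> v}" for x
    using that U_subset_intv[of x] by auto
qed

lemma A_iff:
  assumes "C > 0" "g \<in> M_inf"
  shows "g \<in> A_inf \<longleftrightarrow> Tup C (Tdown C g) = g"
proof -
  have key: "(\<lambda>r. L r) \<longlonglongrightarrow> Tup C (Tdown C g) u"
    if u: "u \<in> U_inf" and L: "\<forall>r. (\<lambda>s. DD ({1..s} - {1..r}) g u) \<longlonglongrightarrow> L r" for u L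
  proof -
    define r0 where "r0 = Max (insert 0 u)"
    have "eventually (\<lambda>r. sum (Tt g) {v. u \<subseteq> v \<and> v \<subseteq> {1..r}} = L r) sequentially"
      unfolding eventually_sequentially
    proof (rule exI[of _ r0], intro allI impI)
      fix r assume "r0 \<le> r"
      then have "u \<subseteq> {1..r}" using U_subset_intv[OF u] unfolding r0_def by auto
      from LIMSEQ_unique[OF Lr_lim[OF assms(2) u this] L[rule_format, of r]]
      show "sum (Tt g) {v. u \<subseteq> v \<and> v \<subseteq> {1..r}} = L r" .
    qed
    from Lim_transform_eventually[OF Pr_lim[OF assms(2) u] this]
    show ?thesis using Tup_Tdown[OF assms(1) u] by simp
  qed
  have outside: "Tup C (Tdown C g) u = g u" if "u \<notin> U_inf" for u
    using that W_zero[OF M_W[OF assms(2)] that] by (simp add: Tup_def)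
  show ?thesis
  proof
    assume "g \<in> A_inf"
    then have A: "\<forall>u\<in>U_inf. \<exists>L. (\<forall>r. (\<lambda>s. DD ({1..s} - {1..r}) g u) \<longlonglongrightarrow> L r) \<and> L \<longlonglongrightarrow> g u"
      by (simp add: A_inf_def Delta_DD)
    show "Tup C (Tdown C g) = g"
    proof
      fix u show "Tup C (Tdown C g) u = g u"
      proof (cases "u \<in> U_inf")
        case True
        then obtain L where "\<forall>r. (\<lambda>s. DD ({1..s} - {1..r}) g u) \<longlonglongrightarrow> L r" "L \<longlonglongrightarrow> g u"
          using A by blast
        with key[OF True] show ?thesis using LIMSEQ_unique by blast
      qed (rule outside)
    qed
  next
    assume eq: "Tup C (Tdown C g) = g"
    have "\<exists>L. (\<forall>r. (\<lambda>s. DD ({1..s} - {1..r}) g u) \<longlonglongrightarrow> L r) \<and> L \<longlonglongrightarrow> g u" if u: "u \<in> U_inf" for u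
    proof -
      define L where "L r = lim (\<lambda>s. DD ({1..s} - {1..r}) g u)" for r
      have L: "\<forall>r. (\<lambda>s. DD ({1..s} - {1..r}) g u) \<longlonglongrightarrow> L r"
      proof
        fix r
        obtain l where "(\<lambda>s. DD ({1..s} - {1..r}) g u) \<longlonglongrightarrow> l"
          using M_conv[OF assms(2) u, of "{1..r}"] by blast
        then show "(\<lambda>s. DD ({1..s} - {1..r}) g u) \<longlonglongrightarrow> L r" unfolding L_def by (simp add: limI)
      qed
      with key[OF u L] eq show ?thesis by auto
    qed
    then show "g \<in> A_inf" using assms(2) by (simp add: A_inf_def Delta_DD)
  qed
qed


lemma P_sub_A:
  fixes C :: real
  assumes "C > 0" "g \<in> P_inf"
  shows "g \<in> A_inf"
proof -
  have M: "g \<in> M_inf" and sg: "g summable_on U_inf" using assms(2) by (auto simp: P_inf_def)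
  have gnn: "\<And>v. v \<in> U_inf \<Longrightarrow> 0 \<le> g v" using W_nonneg[OF M_W[OF M]] .
  have "Tup C (Tdown C g) u = g u" for u
  proof (cases "u \<in> U_inf")
    case False
    then show ?thesis using W_zero[OF M_W[OF M] False] by (simp add: Tup_def)
  next
    case u: True
    let ?Q = "infsum (Tt g) {v\<in>U_inf. u \<subseteq> v}"
    define V where "V r = {v. u \<subseteq> v \<and> v \<subseteq> {1..r}}" for r
    have finV: "finite (V r)" for r unfolding V_def
      by (rule finite_subset[of _ "Pow {1..r}"]) auto
    define r0 where "r0 = Max (insert 0 u)"
    have lb: "g u - infsum g (U_inf - Pow {1..r}) \<le> ?Q" if "r \<ge> r0" for r
    proof -
      have ur: "u \<subseteq> {1..r}" using U_subset_intv[OF u] that unfolding r0_def by auto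
      have "g u - infsum g (U_inf - Pow {1..r}) \<le> (\<Sum>v\<in>V r. DD ({1..s} - v) g v)" if "s \<ge> r" for s
      proof -
        have us: "u \<subseteq> {1..s}" using ur that by auto
        have sub: "V r \<subseteq> V s" unfolding V_def using that by auto
        have "g u = (\<Sum>v\<in>V s. DD ({1..s} - v) g v)"
          using DD_moebius[of "{1..s}" u "{1..s}" g] us unfolding V_def by simp
        also have "\<dots> = (\<Sum>v\<in>V r. DD ({1..s} - v) g v) + (\<Sum>v\<in>V s - V r. DD ({1..s} - v) g v)"
          using sub finV by (simp add: sum.subset_diff)
        also have "(\<Sum>v\<in>V s - V r. DD ({1..s} - v) g v) \<le> (\<Sum>v\<in>V s - V r. g v)"
          by (intro sum_mono M_le_g[OF M]) (auto simp: V_def intro: Pow_intv_U Pow_intv_U')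
        also have "\<dots> \<le> infsum g (U_inf - Pow {1..r})"
        proof (rule finite_sum_le_infsum)
          show "g summable_on (U_inf - Pow {1..r})" by (rule summable_on_subset[OF sg]) auto
          show "V s - V r \<subseteq> U_inf - Pow {1..r}" unfolding V_def using Pow_intv_U by auto
        qed (use finV gnn in auto)
        finally show ?thesis by simp
      qed
      moreover have "(\<lambda>s. \<Sum>v\<in>V r. DD ({1..s} - v) g v) \<longlonglongrightarrow> sum (Tt g) (V r)"
        unfolding V_def by (intro tendsto_sum Tt_lim(1)[OF M] Pow_intv_U) auto
      ultimately have "g u - infsum g (U_inf - Pow {1..r}) \<le> sum (Tt g) (V r)"
        by (intro LIMSEQ_le_const[of _ "sum (Tt g) (V r)"]) auto
      also have "\<dots> \<le> ?Q"
      proof (rule finite_sum_le_infsum[OF Tt_summable(1)[OF M u] finV])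
        show "V r \<subseteq> {v\<in>U_inf. u \<subseteq> v}" unfolding V_def using Pow_intv_U by auto
      qed (use Tt_lim(2)[OF M] in auto)
      finally show ?thesis .
    qed
    have "(\<lambda>r. g u - infsum g (U_inf - Pow {1..r})) \<longlonglongrightarrow> g u - 0"
      by (intro tendsto_intros tail_lim sg)
    then have "g u \<le> ?Q" by (intro LIMSEQ_le_const2[of _ "g u"]) (use lb in auto)
    moreover have "?Q \<le> g u" by (rule Tt_summable(2)[OF M u])
    ultimately show ?thesis using Tup_Tdown[OF assms(1) u] by simp
  qed
  then show ?thesis using A_iff[OF assms(1) M] by auto
qed

lemma Tup_N:
  assumes "C > 0" "h \<in> S_inf C"
  shows "Tup C h \<in> N_inf"
proof -
  let ?c = "\<lambda>v. C ^ (2 * card v) * h v"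
  have "\<exists>N. \<forall>u\<in>U_inf. N \<le> maxU u \<longrightarrow> Tup C h u < \<epsilon>" if e: "\<epsilon> > 0" for \<epsilon>
  proof -
    have "eventually (\<lambda>r. infsum ?c (U_inf - Pow {1..r}) < \<epsilon>) sequentially"
      using order_tendstoD(2)[OF tail_lim[OF S_summ[OF assms(2)]] e] .
    then obtain N0 where N0: "infsum ?c (U_inf - Pow {1..N0}) < \<epsilon>"
      unfolding eventually_sequentially by blast
    have "Tup C h u < \<epsilon>" if u: "u \<in> U_inf" and Nu: "Suc N0 \<le> maxU u" for u
    proof -
      have ne: "u \<noteq> {}" using Nu by (auto simp: maxU_def)
      have fin: "finite u" using u by (simp add: U_inf_def)
      have m: "Max u \<in> u" "Max u > N0" using ne fin Nu by (auto simp: maxU_def)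
      have "Tup C h u = infsum ?c {v\<in>U_inf. u \<subseteq> v}" using u by (simp add: Tup_def)
      also have "\<dots> \<le> infsum ?c (U_inf - Pow {1..N0})"
      proof (rule infsum_mono2)
        show "{v\<in>U_inf. u \<subseteq> v} \<subseteq> U_inf - Pow {1..N0}" using m by auto
      qed (use S_c_nonneg[OF assms] in \<open>auto intro!: S_summ_sub[OF assms(2)]\<close>)
      finally show ?thesis using N0 by simp
    qed
    then show ?thesis by blast
  qed
  then show ?thesis using Tup_M[OF assms] by (simp add: N_inf_def)
qed

definition pg :: "(nat \<Rightarrow> real) \<Rightarrow> nat set \<Rightarrow> real" where
  "pg a u = (if u \<in> U_inf then (\<Prod>i\<in>u. a i) else 0)"

lemma pg_D:
  assumes "finite A" "0 \<notin> A" "u \<in> U_inf" "A \<inter> u = {}"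
  shows "DD A (pg a) u = pg a u * (\<Prod>j\<in>A. 1 - a j)"
  using assms
proof (induction A arbitrary: u rule: finite_induct)
  case empty
  then show ?case by simp
next
  case (insert i A)
  have iu: "insert i u \<in> U_inf" using insert.prems by (intro U_insert) auto
  have fu: "finite u" "i \<notin> u" using insert.prems by (auto simp: U_inf_def)
  have "DD (insert i A) (pg a) u = DD A (pg a) u - DD A (pg a) (insert i u)"
    using insert by (intro DD_insert) auto
  also have "\<dots> = pg a u * (\<Prod>j\<in>A. 1 - a j) - pg a (insert i u) * (\<Prod>j\<in>A. 1 - a j)"
    using insert iu by auto
  also have "pg a (insert i u) = a i * pg a u"
    using iu insert.prems fu by (simp add: pg_def)
  finally show ?case using insert by (simp add: algebra_simps)
qed

lemma pg_M:
  assumes "\<And>i. 0 \<le> a i" "\<And>i. a i \<le> 1"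
  shows "pg a \<in> M_inf"
proof -
  have W: "pg a \<in> W_inf" unfolding W_inf_def pg_def using assms by (auto intro: prod_nonneg)
  have "0 \<le> Delta v (pg a) u" if v: "v \<in> U_inf" and u: "u \<in> U_inf" for u v
  proof (cases "v \<inter> u = {}")
    case True
    have "Delta v (pg a) u = pg a u * (\<Prod>j\<in>v. 1 - a j)"
      using v u True by (simp add: Delta_DD pg_D U_inf_def)
    also have "\<dots> \<ge> 0" using W_nonneg[OF W u] assms
      by (intro mult_nonneg_nonneg prod_nonneg) auto
    finally show ?thesis .
  next
    case False
    then obtain i where "i \<in> v" "i \<in> u" by blast
    then have "DD v (pg a) u = 0" using v by (intro DD_overlap) (auto simp: U_inf_def)
    then show ?thesis using u by (simp add: Delta_DD)
  qed
  then show ?thesis using W by (simp add: M_inf_def)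
qed

lemma pg1_M_not_N: "pg (\<lambda>_. 1) \<in> M_inf - N_inf"
proof -
  have "pg (\<lambda>_. 1) \<notin> N_inf"
  proof
    assume "pg (\<lambda>_. 1) \<in> N_inf"
    then have "\<forall>\<epsilon>>0. \<exists>N. \<forall>u\<in>U_inf. N \<le> maxU u \<longrightarrow> pg (\<lambda>_. 1) u < \<epsilon>"
      unfolding N_inf_def by blast
    from this[rule_format, of 1] obtain N where N: "\<forall>u\<in>U_inf. N \<le> maxU u \<longrightarrow> pg (\<lambda>_. 1) u < 1"
      by auto
    have "{Suc N} \<in> U_inf" by (simp add: U_inf_def)
    moreover have "N \<le> maxU {Suc N}" by (simp add: maxU_def)
    ultimately have "pg (\<lambda>_. 1) {Suc N} < 1" using N by blast
    then show False using \<open>{Suc N} \<in> U_inf\<close> by (simp add: pg_def)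
  qed
  then show ?thesis using pg_M[of "\<lambda>_. 1"] by simp
qed

lemma telesc:
  "r \<le> s \<Longrightarrow> (\<Prod>j\<in>{1..s}-{1..r}. 1 - 1 / (real j + 1)) = (real r + 1) / (real s + 1)"
proof (induction s)
  case 0
  then show ?case by simp
next
  case (Suc s)
  show ?case
  proof (cases "r = Suc s")
    case True
    then show ?thesis by simp
  next
    case False
    then have rs: "r \<le> s" using Suc.prems by simp
    have e: "{1..Suc s} - {1..r} = insert (Suc s) ({1..s} - {1..r})" using rs by auto
    have "(\<Prod>j\<in>{1..Suc s}-{1..r}. 1 - 1 / (real j + 1))
        = (1 - 1 / (real (Suc s) + 1)) * ((real r + 1) / (real s + 1))"
      unfolding e using Suc.IH[OF rs] by (subst prod.insert) auto
    also have "\<dots> = (real r + 1) / (real (Suc s) + 1)"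
    proof -
      have a: "1 - 1 / (real (Suc s) + 1) = (real s + 1) / (real s + 2)" by (simp add: field_simps)
      have b: "real (Suc s) + 1 = real s + 2" by simp
      show ?thesis unfolding a b by (simp add: divide_simps)
    qed
    finally show ?thesis .
  qed
qed

definition ah :: "nat \<Rightarrow> real" where "ah i = 1 / (real i + 1)"

lemma pgh_M: "pg ah \<in> M_inf"
  by (rule pg_M) (auto simp: ah_def)

lemma pgh_N: "pg ah \<in> N_inf"
proof -
  have "\<exists>N. \<forall>u\<in>U_inf. N \<le> maxU u \<longrightarrow> pg ah u < \<epsilon>" if e: "\<epsilon> > 0" for \<epsilon>
  proof -
    obtain N :: nat where N: "1 / \<epsilon> < real N" using reals_Archimedean2 by blast
    have "0 < 1 / \<epsilon>" using e by simp
    then have "0 < real N" using N by linarith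
    then have Npos: "N > 0" by simp
    have "pg ah u < \<epsilon>" if u: "u \<in> U_inf" and Nu: "N \<le> maxU u" for u
    proof -
      have ne: "u \<noteq> {}" using Nu Npos by (auto simp: maxU_def)
      have fin: "finite u" using u by (simp add: U_inf_def)
      define m where "m = Max u"
      have m: "m \<in> u" "N \<le> m" using ne fin Nu by (auto simp: maxU_def m_def)
      have "pg ah u = ah m * (\<Prod>i\<in>u - {m}. ah i)"
        using u fin m by (simp add: pg_def prod.remove)
      also have "\<dots> \<le> ah m * 1"
        by (intro mult_left_mono prod_le_1) (auto simp: ah_def)
      also have "ah m < \<epsilon>"
      proof -
        have "1 / \<epsilon> < real m + 1" using N m by linarith
        then show ?thesis using e unfolding ah_def
          by (simp add: divide_less_eq mult.commute)
      qed
      finally show ?thesis by simp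
    qed
    then show ?thesis by blast
  qed
  then show ?thesis using pgh_M by (simp add: N_inf_def)
qed

lemma pgh_not_A: "pg ah \<notin> A_inf"
proof
  assume "pg ah \<in> A_inf"
  moreover have e: "{} \<in> U_inf" by (simp add: U_inf_def)
  ultimately obtain L where L: "\<forall>r. (\<lambda>s. Delta ({1..s} - {1..r}) (pg ah) {}) \<longlonglongrightarrow> L r"
    "L \<longlonglongrightarrow> pg ah {}" unfolding A_inf_def by blast
  have "L r = 0" for r
  proof -
    have ev: "eventually (\<lambda>s. (real r + 1) * inverse (real (Suc s)) = Delta ({1..s} - {1..r}) (pg ah) {}) sequentially"
      unfolding eventually_sequentially
    proof (rule exI[of _ r], intro allI impI)
      fix s assume rs: "r \<le> s"
      have "Delta ({1..s} - {1..r}) (pg ah) {} = pg ah {} * (\<Prod>j\<in>{1..s} - {1..r}. 1 - ah j)"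
        using e by (simp add: Delta_DD pg_D)
      also have "\<dots> = (real r + 1) / (real s + 1)"
        using e telesc[OF rs] by (simp add: pg_def ah_def)
      finally show "(real r + 1) * inverse (real (Suc s)) = Delta ({1..s} - {1..r}) (pg ah) {}"
        by (simp add: divide_inverse add.commute)
    qed
    have "(\<lambda>s. (real r + 1) * inverse (real (Suc s))) \<longlonglongrightarrow> (real r + 1) * 0"
      by (intro tendsto_intros LIMSEQ_inverse_real_of_nat)
    then have "(\<lambda>s. Delta ({1..s} - {1..r}) (pg ah) {}) \<longlonglongrightarrow> 0"
      using Lim_transform_eventually[OF _ ev] by simp
    then show ?thesis using L(1) LIMSEQ_unique by blast
  qed
  then have "L = (\<lambda>_. 0)" by auto
  then have "L \<longlonglongrightarrow> 0" by simp
  then have "pg ah {} = 0" using L(2) LIMSEQ_unique by blast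
  then show False using e by (simp add: pg_def)
qed


definition hx :: "real \<Rightarrow> nat set \<Rightarrow> real" where
  "hx C v = (if v = {1..card v} then (2/3) ^ card v / C ^ (2 * card v) else 0)"

lemma hx_c:
  assumes "C > 0"
  shows "C ^ (2 * card v) * hx C v = (if v = {1..card v} then (2/3) ^ card v else 0)"
  using assms by (simp add: hx_def)

lemma hx_S:
  fixes C :: real
  assumes "C > 0"
  shows "hx C \<in> S_inf C"
proof -
  let ?c = "\<lambda>v. C ^ (2 * card v) * hx C v"
  have W: "hx C \<in> W_inf"
    unfolding W_inf_def mem_Collect_eq
  proof (intro conjI ballI allI impI)
    fix u :: "nat set" show "0 \<le> hx C u" using assms by (simp add: hx_def)
  next
    fix u :: "nat set" assume "u \<notin> U_inf"
    then have "u \<noteq> {1..card u}" using U_intv by metis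
    then show "hx C u = 0" by (simp add: hx_def)
  qed
  have inj: "inj (\<lambda>n::nat. {1..n})"
    by (rule injI) (metis card_atLeastAtMost diff_Suc_1)
  have "(\<lambda>n::nat. (2/3::real) ^ n) summable_on UNIV"
    by (subst summable_on_UNIV_nonneg_real_iff) (auto intro: summable_geometric)
  moreover have "(?c \<circ> (\<lambda>n. {1..n})) = (\<lambda>n::nat. (2/3::real) ^ n)"
    using assms by (auto simp: hx_def o_def)
  ultimately have "(?c \<circ> (\<lambda>n. {1..n})) summable_on UNIV" by simp
  then have "?c summable_on range (\<lambda>n. {1..n})"
    using summable_on_reindex[OF inj] by blast
  moreover have "?c summable_on U_inf \<longleftrightarrow> ?c summable_on range (\<lambda>n. {1..n})"
  proof (rule summable_on_cong_neutral)
    fix x assume "x \<in> range (\<lambda>n. {1..n}) - U_inf" then show "?c x = 0" by auto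
  next
    fix x assume "x \<in> U_inf - range (\<lambda>n. {1..n})"
    then have "x \<noteq> {1..card x}" by auto
    then show "?c x = 0" by (simp add: hx_def)
  qed simp
  ultimately show ?thesis using W by (simp add: S_inf_def)
qed

lemma hx_not_P:
  fixes C :: real
  assumes "C > 0"
  shows "Tup C (hx C) \<notin> P_inf"
proof
  let ?c = "\<lambda>v. C ^ (2 * card v) * hx C v"
  let ?g = "Tup C (hx C)"
  assume "?g \<in> P_inf"
  then have sg: "?g summable_on U_inf" by (simp add: P_inf_def)
  have S: "hx C \<in> S_inf C" by (rule hx_S[OF assms])
  have bound: "(4/3::real) ^ n \<le> infsum ?g U_inf" for n
  proof -
    have PU: "Pow {1..n} \<subseteq> U_inf" using Pow_intv_U by auto
    have each: "(2/3) ^ n \<le> ?g v" if v: "v \<subseteq> {1..n}" for v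
    proof -
      have vU: "v \<in> U_inf" using Pow_intv_U[OF v] .
      have "(2/3::real) ^ n = sum ?c {{1..n}}" using hx_c[OF assms, of "{1..n}"] by simp
      also have "\<dots> \<le> infsum ?c {w\<in>U_inf. v \<subseteq> w}"
        by (rule finite_sum_le_infsum) (use v S_c_nonneg[OF assms S] in \<open>auto intro!: S_summ_sub[OF S]\<close>)
      also have "\<dots> = ?g v" using vU by (simp add: Tup_def)
      finally show ?thesis .
    qed
    have "(4/3::real) ^ n = real (card (Pow {1..n})) * (2/3) ^ n"
      by (simp add: card_Pow power_mult_distrib[symmetric])
    also have "\<dots> = (\<Sum>v\<in>Pow {1..n}. (2/3::real) ^ n)" by simp
    also have "\<dots> \<le> (\<Sum>v\<in>Pow {1..n}. ?g v)" by (intro sum_mono each) auto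
    also have "\<dots> \<le> infsum ?g U_inf"
      by (rule finite_sum_le_infsum[OF sg]) (use PU Tup_nonneg[OF assms S] in auto)
    finally show ?thesis .
  qed
  obtain n where "infsum ?g U_inf < (4/3::real) ^ n" using real_arch_pow[of "4/3"] by auto
  with bound[of n] show False by simp
qed


theorem mainTheorem2:
  fixes C :: real
  assumes "C > 0"
  shows "P_inf \<subset> A_inf \<and> A_inf = Tup C ` S_inf C \<and> A_inf \<subset> N_inf \<and> N_inf \<subset> M_inf
    \<and> bij_betw (Tup C) (S_inf C) A_inf
    \<and> (\<forall>g\<in>S_inf C. Tdown C (Tup C g) = g)
    \<and> (\<forall>g\<in>A_inf. Tup C (Tdown C g) = g)
    \<and> Tdown C ` M_inf = S_inf C
    \<and> (\<forall>g\<in>M_inf. (\<forall>u\<in>U_inf. Tup C (Tdown C g) u \<le> g u)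
                  \<and> (Tup C (Tdown C g) = g \<longleftrightarrow> g \<in> A_inf))"
proof -
  have AM: "A_inf \<subseteq> M_inf" unfolding A_inf_def by blast
  have PM: "P_inf \<subseteq> M_inf" unfolding P_inf_def by blast
  have NM: "N_inf \<subseteq> M_inf" unfolding N_inf_def by blast
  have TupA: "Tup C h \<in> A_inf" if "h \<in> S_inf C" for h
    using A_iff[OF assms Tup_M[OF assms that]] Tdown_Tup[OF assms that] by simp
  have AinvS: "Tup C (Tdown C g) = g" if "g \<in> A_inf" for g
    using A_iff[OF assms] that AM by blast
  have AT: "A_inf = Tup C ` S_inf C"
  proof
    show "A_inf \<subseteq> Tup C ` S_inf C"
    proof
      fix g assume g: "g \<in> A_inf"
      have "g = Tup C (Tdown C g)" using AinvS[OF g] by simp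
      moreover have "Tdown C g \<in> S_inf C" using Tdown_S[OF assms] g AM by blast
      ultimately show "g \<in> Tup C ` S_inf C" by (rule image_eqI)
    qed
  next
    show "Tup C ` S_inf C \<subseteq> A_inf" using TupA by (rule image_subsetI)
  qed
  have PA: "P_inf \<subset> A_inf"
  proof -
    have "P_inf \<subseteq> A_inf" using P_sub_A[OF assms] by blast
    moreover have "Tup C (hx C) \<in> A_inf - P_inf"
      using TupA[OF hx_S[OF assms]] hx_not_P[OF assms] by blast
    ultimately show ?thesis by blast
  qed
  have AN: "A_inf \<subset> N_inf"
  proof -
    have "Tup C ` S_inf C \<subseteq> N_inf" using Tup_N[OF assms] by (rule image_subsetI)
    then have "A_inf \<subseteq> N_inf" unfolding AT .
    moreover have "pg ah \<in> N_inf - A_inf" using pgh_N pgh_not_A by blast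
    ultimately show ?thesis by blast
  qed
  have NMs: "N_inf \<subset> M_inf" using NM pg1_M_not_N by blast
  have bij: "bij_betw (Tup C) (S_inf C) A_inf"
    unfolding bij_betw_def
  proof
    show "inj_on (Tup C) (S_inf C)"
      by (rule inj_on_inverseI[of _ "Tdown C"]) (rule Tdown_Tup[OF assms])
  next
    show "Tup C ` S_inf C = A_inf" using AT by (rule sym)
  qed
  have img: "Tdown C ` M_inf = S_inf C"
  proof
    show "Tdown C ` M_inf \<subseteq> S_inf C" using Tdown_S[OF assms] by blast
    show "S_inf C \<subseteq> Tdown C ` M_inf"
    proof
      fix h assume h: "h \<in> S_inf C"
      then have "h = Tdown C (Tup C h)" using Tdown_Tup[OF assms] by simp
      then show "h \<in> Tdown C ` M_inf" using Tup_M[OF assms h] by blast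
    qed
  qed
  have last: "\<forall>g\<in>M_inf. (\<forall>u\<in>U_inf. Tup C (Tdown C g) u \<le> g u)
                  \<and> (Tup C (Tdown C g) = g \<longleftrightarrow> g \<in> A_inf)"
  proof (intro ballI conjI)
    fix g u assume g: "g \<in> M_inf" and u: "u \<in> U_inf"
    show "Tup C (Tdown C g) u \<le> g u"
      using Tup_Tdown[OF assms u] Tt_summable(2)[OF g u] by simp
  next
    fix g assume g: "g \<in> M_inf"
    show "Tup C (Tdown C g) = g \<longleftrightarrow> g \<in> A_inf" using A_iff[OF assms g] by simp
  qed
  have s1: "\<forall>g\<in>S_inf C. Tdown C (Tup C g) = g" using Tdown_Tup[OF assms] by blast
  have s2: "\<forall>g\<in>A_inf. Tup C (Tdown C g) = g" using AinvS by blast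
  show ?thesis
    using PA AT AN NMs bij s1 s2 img last by (intro conjI) assumption+
qed

end
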